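(* Let $\alpha,\beta,\gamma\in\{1,-1\}$, $u_1,\dots,u_4\in\Bbbk^\times$, and let $D(\mathfrak{D}_4)$ act on $B$ as in the context. Then the group-grade component of the homological determinant $\mathrm{hdet}_B:D(\mathfrak{D}_4)\to\Bbbk$ is trivial (i.e. $\mathrm{hdet}_B(\phi_g)=\delta_{g,e}$), and $$\mathrm{hdet}_B(r)=-\alpha\beta\gamma,\qquad \mathrm{hdet}_B(s)=-\beta\gamma.$$ In particular the homological determinant is trivial (equal to the counit) if and only if $\alpha=1$ and $\beta=-\gamma$.
   Context: Let $\Bbbk=\mathbb{C}$, $i=\sqrt{-1}$, $\mathfrak{D}_4=\langle r,s\mid r^4=e,\ s^2=r^2,\ rsrs^{-1}=e\rangle$. The Drinfeld double $D(G)$ has basis $\{\phi_gh\}$, multiplication $(\phi_g h)(\phi_{g'}h')=\delta_{g,hg'h^{-1}}\phi_g hh'$, comultiplication $\Delta(\phi_gh)=\sum_x\phi_xh\otimes\phi_{x^{-1}g}h$, counit $\epsilon(\phi_gh)=\delta_{g,e}$. A right $D(G)$-module algebra is a $G$-graded algebra with a right $G$-action by algebra automorphisms with $A_x\cdot g\subseteq A_{g^{-1}xg}$, $\phi_x$ projecting onto $A_x$. The homological determinant $\mathrm{hdet}_B$ of a Hopf action on an AS regular algebra is that of Kirkman–Kuzmanovich–Zhang; for a Koszul AS regular algebra $B$ it is the character by which $D(G)$ acts on the one-dimensional span of the twisted superpotential of $B$. The algebra $B$ is $\Bbbk\langle x_1,x_2,y_1,y_2,z_1,z_2\rangle$ modulo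 $x_1x_2-\alpha x_2x_1$, $y_1y_2-\beta y_2y_1$, $z_1z_2-\gamma z_2z_1$, $x_1y_1-u_1y_1x_2$, $x_2y_1-u_1y_1x_1$, $x_1y_2+u_1y_2x_2$, $x_2y_2+u_1y_2x_1$, $x_1z_1-iu_2z_1x_2$, $x_2z_1-iu_2z_1x_1$, $ix_1z_2-u_2z_2x_2$, $ix_2z_2-u_2z_2x_1$, $y_1z_2-u_3z_2y_1$, $y_2z_1-u_3z_1y_2$, $y_1z_1-u_4z_1y_1$, $y_2z_2-u_4z_2y_2$; it is Koszul AS regular of dimension 6. The $D(\mathfrak{D}_4)$-module algebra structure is given on generators by: $x_1$: grade $s$, $x_1\cdot r=x_2$, $x_1\cdot s=-ix_1$; $x_2$: grade $sr^2$, $x_2\cdot r=-x_1$, $x_2\cdot s=ix_2$; $y_1$: grade $sr$, $y_1\cdot r=-y_2$, $y_1\cdot s=y_2$; $y_2$: grade $sr^3$, $y_2\cdot r=-y_1$, $y_2\cdot s=y_1$; $z_1$: grade $sr$, $z_1\cdot r=-iz_2$, $z_1\cdot s=z_2$; $z_2$: grade $sr^3$, $z_2\cdot r=-iz_1$, $z_2\cdot s=-z_1$. *)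

theory Defs
  imports Complex_Main
begin

text \<open>An element (a,b) with a in {0..3}, b in {0,1} stands for r^a s^b.
  From s r s^-1 = r^-1 we get s r^c = r^-c s, and s^2 = r^2.\<close>

type_synonym grp = "int \<times> int"

definition G :: "grp set" where
  "G = {0..3} \<times> {0..1}"

definition gmul :: "grp \<Rightarrow> grp \<Rightarrow> grp" where
  "gmul x y = (case x of (a, b) \<Rightarrow> case y of (c, d) \<Rightarrow>
     ((a + (if b = 1 then - c else c) + (if b = 1 \<and> d = 1 then 2 else 0)) mod 4,
      (b + d) mod 2))"

definition ge :: grp where "ge = (0, 0)"
definition gr :: grp where "gr = (1, 0)"
definition gs :: grp where "gs = (0, 1)"

section \<open>Generators of B: x1=0, x2=1, y1=2, y2=3, z1=4, z2=5\<close>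

definition gen_grade :: "nat \<Rightarrow> grp" where
  "gen_grade j = (if j = 0 then gs                 \<comment> \<open>x1 : s\<close>
             else if j = 1 then gmul gs (gmul gr gr) \<comment> \<open>x2 : s r^2\<close>
             else if j = 2 then gmul gs gr            \<comment> \<open>y1 : s r\<close>
             else if j = 3 then gmul gs (gmul gr (gmul gr gr)) \<comment> \<open>y2 : s r^3\<close>
             else if j = 4 then gmul gs gr            \<comment> \<open>z1 : s r\<close>
             else gmul gs (gmul gr (gmul gr gr)))"    \<comment> \<open>z2 : s r^3\<close>

text \<open>Right action matrices: v_j . g = sum_k M j k v_k.\<close>

definition Mr :: "nat \<Rightarrow> nat \<Rightarrow> complex" where
  "Mr j k = (if (j, k) = (0, 1) then 1
        else if (j, k) = (1, 0) then -1
        else if (j, k) = (2, 3) then -1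
        else if (j, k) = (3, 2) then -1
        else if (j, k) = (4, 5) then - \<i>
        else if (j, k) = (5, 4) then - \<i>
        else 0)"

definition Ms :: "nat \<Rightarrow> nat \<Rightarrow> complex" where
  "Ms j k = (if (j, k) = (0, 0) then - \<i>
        else if (j, k) = (1, 1) then \<i>
        else if (j, k) = (2, 3) then 1
        else if (j, k) = (3, 2) then 1
        else if (j, k) = (4, 5) then 1
        else if (j, k) = (5, 4) then -1
        else 0)"

definition matmul :: "(nat \<Rightarrow> nat \<Rightarrow> complex) \<Rightarrow> (nat \<Rightarrow> nat \<Rightarrow> complex) \<Rightarrow> nat \<Rightarrow> nat \<Rightarrow> complex" where
  "matmul A B j k = (\<Sum>l<6. A j l * B l k)"

definition matid :: "nat \<Rightarrow> nat \<Rightarrow> complex" where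
  "matid j k = (if j = k then 1 else 0)"

primrec matpow :: "(nat \<Rightarrow> nat \<Rightarrow> complex) \<Rightarrow> nat \<Rightarrow> nat \<Rightarrow> nat \<Rightarrow> complex" where
  "matpow A 0 = matid"
| "matpow A (Suc n) = matmul (matpow A n) A"

text \<open>Matrix of the right action of r^a s^b on V = span of the generators
  (right action: v.(r^a s^b) = (v.r^a).s^b).\<close>
definition gmat :: "grp \<Rightarrow> nat \<Rightarrow> nat \<Rightarrow> complex" where
  "gmat g = matmul (matpow Mr (nat (fst g))) (matpow Ms (nat (snd g)))"

section \<open>Tensor powers of V, as coefficient functions on index words\<close>

definition idx :: "nat \<Rightarrow> nat list set" where
  "idx n = {ks. length ks = n \<and> set ks \<subseteq> {..<6}}"

definition word_grade :: "nat list \<Rightarrow> grp" where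
  "word_grade ks = foldl (\<lambda>g j. gmul g (gen_grade j)) ge ks"

text \<open>Projection phi_g onto the G-degree g part of V^{\<otimes>6}.\<close>
definition proj :: "grp \<Rightarrow> (nat list \<Rightarrow> complex) \<Rightarrow> nat list \<Rightarrow> complex" where
  "proj g w ks = (if word_grade ks = g then w ks else 0)"

definition gact :: "grp \<Rightarrow> (nat list \<Rightarrow> complex) \<Rightarrow> nat list \<Rightarrow> complex" where
  "gact h w ls = (if ls \<in> idx 6 then
      (\<Sum>ks\<in>idx 6. w ks * (\<Prod>t<6. gmat h (ks ! t) (ls ! t))) else 0)"

text \<open>Elements of D(G): coefficient functions x g h on the basis phi_g h.
  The action of phi_g h is w |-> (w . phi_g) . h.\<close>
definition dact :: "(grp \<Rightarrow> grp \<Rightarrow> complex) \<Rightarrow> (nat list \<Rightarrow> complex) \<Rightarrow> nat list \<Rightarrow> complex" where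
  "dact x w ks = (\<Sum>g\<in>G. \<Sum>h\<in>G. x g h * gact h (proj g w) ks)"

definition dphi :: "grp \<Rightarrow> grp \<Rightarrow> grp \<Rightarrow> complex" where
  "dphi g = (\<lambda>g' h'. if g' = g \<and> h' = ge then 1 else 0)"

definition dgrp :: "grp \<Rightarrow> grp \<Rightarrow> grp \<Rightarrow> complex" where
  "dgrp h = (\<lambda>g' h'. if h' = h then 1 else 0)"

definition dcounit :: "(grp \<Rightarrow> grp \<Rightarrow> complex) \<Rightarrow> complex" where
  "dcounit x = (\<Sum>h\<in>G. x ge h)"

definition mono2 :: "nat \<Rightarrow> nat \<Rightarrow> nat list \<Rightarrow> complex" where
  "mono2 a b ks = (if ks = [a, b] then 1 else 0)"

definition bin :: "complex \<Rightarrow> nat \<Rightarrow> nat \<Rightarrow> complex \<Rightarrow> nat \<Rightarrow> nat \<Rightarrow> nat list \<Rightarrow> complex" where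
  "bin c a b d e f ks = c * mono2 a b ks + d * mono2 e f ks"

definition rels :: "complex \<Rightarrow> complex \<Rightarrow> complex \<Rightarrow> complex \<Rightarrow> complex \<Rightarrow> complex \<Rightarrow> complex
    \<Rightarrow> (nat list \<Rightarrow> complex) list" where
  "rels \<alpha> \<beta> \<gamma> u1 u2 u3 u4 =
    [bin 1 0 1 (- \<alpha>) 1 0,
     bin 1 2 3 (- \<beta>) 3 2,
     bin 1 4 5 (- \<gamma>) 5 4,
     bin 1 0 2 (- u1) 2 1,
     bin 1 1 2 (- u1) 2 0,
     bin 1 0 3 u1 3 1,
     bin 1 1 3 u1 3 0,
     bin 1 0 4 (- \<i> * u2) 4 1,
     bin 1 1 4 (- \<i> * u2) 4 0,
     bin \<i> 0 5 (- u2) 5 1,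
     bin \<i> 1 5 (- u2) 5 0,
     bin 1 2 5 (- u3) 5 2,
     bin 1 3 4 (- u3) 4 3,
     bin 1 2 4 (- u4) 4 2,
     bin 1 3 5 (- u4) 5 3]"

definition in_R :: "(nat list \<Rightarrow> complex) list \<Rightarrow> (nat list \<Rightarrow> complex) \<Rightarrow> bool" where
  "in_R rs f = (\<exists>c :: nat \<Rightarrow> complex. \<forall>ks\<in>idx 2.
      f ks = (\<Sum>j<length rs. c j * (rs ! j) ks))"

text \<open>W = \<Inter>_{i=0..4} V^{\<otimes>i} \<otimes> R \<otimes> V^{\<otimes>(4-i)} \<subseteq> V^{\<otimes>6}, the span of the
  twisted superpotential of the Koszul AS regular algebra of dimension 6.\<close>
definition Wsp :: "(nat list \<Rightarrow> complex) list \<Rightarrow> (nat list \<Rightarrow> complex) set" where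
  "Wsp rs = {w. (\<forall>ks. ks \<notin> idx 6 \<longrightarrow> w ks = 0) \<and>
      (\<forall>i\<le>4. \<forall>p\<in>idx i. \<forall>q\<in>idx (4 - i). in_R rs (\<lambda>m. w (p @ m @ q)))}"

definition hdet :: "(nat list \<Rightarrow> complex) list \<Rightarrow> (grp \<Rightarrow> grp \<Rightarrow> complex) \<Rightarrow> complex" where
  "hdet rs x = (THE c. \<forall>w\<in>Wsp rs. dact x w = (\<lambda>ks. c * w ks))"

end

theory Submission
  imports Defs
begin


definition Rc :: "complex \<Rightarrow> complex \<Rightarrow> complex \<Rightarrow> complex \<Rightarrow> complex \<Rightarrow> complex \<Rightarrow> complex
    \<Rightarrow> (nat list \<Rightarrow> complex) \<Rightarrow> bool" where
  "Rc \<alpha> \<beta> \<gamma> u1 u2 u3 u4 f \<longleftrightarrow> (\<forall>a<6. f [a,a] = 0) \<and>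
     f [1,0] = - \<alpha> * f [0,1] \<and> f [3,2] = - \<beta> * f [2,3] \<and> f [5,4] = - \<gamma> * f [4,5] \<and>
     f [2,1] = - u1 * f [0,2] \<and> f [2,0] = - u1 * f [1,2] \<and>
     f [3,1] = u1 * f [0,3] \<and> f [3,0] = u1 * f [1,3] \<and>
     f [4,1] = - \<i> * u2 * f [0,4] \<and> f [4,0] = - \<i> * u2 * f [1,4] \<and>
     f [5,1] = \<i> * u2 * f [0,5] \<and> f [5,0] = \<i> * u2 * f [1,5] \<and>
     f [5,2] = - u3 * f [2,5] \<and> f [4,3] = - u3 * f [3,4] \<and>
     f [4,2] = - u4 * f [2,4] \<and> f [5,3] = - u4 * f [3,5]"

lemma six_cases: "(a::nat) < 6 \<Longrightarrow> a = 0 \<or> a = 1 \<or> a = 2 \<or> a = 3 \<or> a = 4 \<or> a = 5"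
  by arith

lemma idx2_cases: "ks \<in> idx 2 \<Longrightarrow> \<exists>a b. ks = [a,b] \<and> a < 6 \<and> b < 6"
proof -
  assume "ks \<in> idx 2"
  then have l: "length ks = 2" and s: "set ks \<subseteq> {..<6}" by (auto simp: idx_def)
  then obtain a b where "ks = [a,b]"
    by (metis One_nat_def Suc_1 length_0_conv length_Suc_conv)
  with s show ?thesis by auto
qed

lemma in_R_iff: "in_R (rels \<alpha> \<beta> \<gamma> u1 u2 u3 u4) f \<longleftrightarrow> Rc \<alpha> \<beta> \<gamma> u1 u2 u3 u4 f"
proof
  assume "in_R (rels \<alpha> \<beta> \<gamma> u1 u2 u3 u4) f"
  then obtain c where c: "\<And>ks. ks \<in> idx 2 \<Longrightarrow> f ks = (\<Sum>j<length (rels \<alpha> \<beta> \<gamma> u1 u2 u3 u4). c j * (rels \<alpha> \<beta> \<gamma> u1 u2 u3 u4 ! j) ks)"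
    unfolding in_R_def by blast
  have e: "\<And>a b. a < 6 \<Longrightarrow> b < 6 \<Longrightarrow> f [a,b] = (\<Sum>j<length (rels \<alpha> \<beta> \<gamma> u1 u2 u3 u4). c j * (rels \<alpha> \<beta> \<gamma> u1 u2 u3 u4 ! j) [a,b])"
    by (rule c) (auto simp: idx_def)
  have sq: "\<forall>a<6. f [a,a] = 0"
  proof (intro allI impI)
    fix a :: nat assume "a < 6"
    then show "f [a,a] = 0" using e[of a a] six_cases[of a]
      by (auto simp: rels_def bin_def mono2_def lessThan_nat_numeral)
  qed
  show "Rc \<alpha> \<beta> \<gamma> u1 u2 u3 u4 f"
    unfolding Rc_def
    apply (intro conjI)
    apply (rule sq)
    apply (simp_all add: e rels_def bin_def mono2_def lessThan_nat_numeral)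
    apply (simp_all add: algebra_simps)
    done
next
  assume R: "Rc \<alpha> \<beta> \<gamma> u1 u2 u3 u4 f"
  define cl where "cl = [f [0,1], f [2,3], f [4,5], f [0,2], f [1,2], f [0,3], f [1,3], f [0,4], f [1,4],
     f [0,5] / \<i>, f [1,5] / \<i>, f [2,5], f [3,4], f [2,4], f [3,5]]"
  show "in_R (rels \<alpha> \<beta> \<gamma> u1 u2 u3 u4) f"
    unfolding in_R_def
  proof (intro exI[of _ "\<lambda>j. cl ! j"] ballI)
    fix ks assume "ks \<in> idx 2"
    then obtain a b where ks: "ks = [a,b]" "a < 6" "b < 6" using idx2_cases by blast
    show "f ks = (\<Sum>j<length (rels \<alpha> \<beta> \<gamma> u1 u2 u3 u4). cl ! j * (rels \<alpha> \<beta> \<gamma> u1 u2 u3 u4 ! j) ks)"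
      using R six_cases[OF ks(2)] six_cases[OF ks(3)] unfolding ks(1) Rc_def
      apply (elim conjE disjE)
      apply (simp_all add: rels_def bin_def mono2_def lessThan_nat_numeral cl_def)
      apply (simp_all add: algebra_simps)
      done
  qed
qed

lemma Wsp_iff: "w \<in> Wsp rs \<longleftrightarrow> (\<forall>ks. ks \<notin> idx 6 \<longrightarrow> w ks = 0) \<and>
   (\<forall>p q. length p + length q = 4 \<longrightarrow> set p \<subseteq> {..<6} \<longrightarrow> set q \<subseteq> {..<6} \<longrightarrow> in_R rs (\<lambda>m. w (p @ m @ q)))"
  unfolding Wsp_def idx_def
  apply (auto)
   apply (drule_tac x="length p" in spec)
   apply auto
  done

fun nrm :: "bool \<Rightarrow> nat list \<Rightarrow> nat list" where
  "nrm b [] = []"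
| "nrm b (a # l) = (if a < 2 then (if b then 1 - a else a) # nrm b l else a # nrm (\<not> b) l)"

fun pb :: "bool \<Rightarrow> nat list \<Rightarrow> bool" where
  "pb b [] = b"
| "pb b (a # l) = pb (if a < 2 then b else \<not> b) l"

lemma nrm_append: "nrm b (p @ q) = nrm b p @ nrm (pb b p) q"
  by (induction p arbitrary: b) auto

lemma pb_append: "pb b (p @ q) = pb (pb b p) q"
  by (induction p arbitrary: b) auto

lemma length_nrm[simp]: "length (nrm b l) = length l"
  by (induction l arbitrary: b) auto

lemma nrm_lt6: "set l \<subseteq> {..<6} \<Longrightarrow> set (nrm b l) \<subseteq> {..<6}"
  by (induction l arbitrary: b) auto

lemma nrm_inj: "nrm b l1 = nrm b l2 \<Longrightarrow> set l1 \<subseteq> {..<6} \<Longrightarrow> l1 = l2"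
proof (induction l1 arbitrary: b l2)
  case Nil then show ?case by (cases l2) (auto split: if_splits)
next
  case (Cons a l1)
  then show ?case
    by (cases l2) (auto split: if_splits)
qed

locale prm =
  fixes \<alpha> \<beta> \<gamma> u1 u2 u3 u4 :: complex
begin

definition tt :: "nat \<Rightarrow> nat \<Rightarrow> complex" where
  "tt a b = (if (a,b) = (0,1) then - \<alpha> else if (a,b) = (2,3) then - \<beta> else if (a,b) = (4,5) then - \<gamma>
     else if (a,b) = (0,2) \<or> (a,b) = (1,2) then - u1
     else if (a,b) = (0,3) \<or> (a,b) = (1,3) then u1
     else if (a,b) = (0,4) \<or> (a,b) = (1,4) then - \<i> * u2
     else if (a,b) = (0,5) \<or> (a,b) = (1,5) then \<i> * u2
     else if (a,b) = (2,4) \<or> (a,b) = (3,5) then - u4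
     else if (a,b) = (2,5) \<or> (a,b) = (3,4) then - u3 else 1)"

definition fx :: "nat \<Rightarrow> nat list \<Rightarrow> complex" where
  "fx x l = prod_list (map (\<lambda>y. if y < x then tt y x else 1) l)"

fun invp :: "nat list \<Rightarrow> complex" where
  "invp [] = 1"
| "invp (x # l) = fx x l * invp l"

lemma fx_swap: "fx x (P @ [u, v] @ Q) = fx x (P @ [v, u] @ Q)"
  unfolding fx_def by (simp add: ac_simps)

lemma invp_swap: "u < v \<Longrightarrow> invp (P @ [v, u] @ Q) = tt u v * invp (P @ [u, v] @ Q)"
proof (induction P)
  case Nil then show ?case by (simp add: fx_def)
next
  case (Cons x P)
  then show ?case using fx_swap[of x P u v Q] by (simp add: ac_simps)
qed

definition w0 :: "nat list \<Rightarrow> complex" where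
  "w0 ks = (if ks \<in> idx 6 \<and> distinct (nrm False ks) then invp (nrm False ks) else 0)"

lemma w0_swap:
  assumes "a < 6" "b < 6" "e < 6" "f < 6"
    and "nrm (pb False p) [a, b] = [u, v]" "nrm (pb False p) [e, f] = [v, u]"
    and "pb (pb False p) [a, b] = pb (pb False p) [e, f]" and "u < v"
  shows "w0 (p @ [e, f] @ q) = tt u v * w0 (p @ [a, b] @ q)"
proof -
  have n1: "nrm False (p @ [a, b] @ q) = nrm False p @ [u, v] @ nrm (pb (pb False p) [a, b]) q"
  proof -
    have "nrm False (p @ [a, b] @ q) = nrm False p @ (nrm (pb False p) [a, b] @ nrm (pb (pb False p) [a, b]) q)"
      by (simp only: nrm_append)
    then show ?thesis using assms(5) by simp
  qed
  have n2: "nrm False (p @ [e, f] @ q) = nrm False p @ [v, u] @ nrm (pb (pb False p) [a, b]) q"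
  proof -
    have "nrm False (p @ [e, f] @ q) = nrm False p @ (nrm (pb False p) [e, f] @ nrm (pb (pb False p) [e, f]) q)"
      by (simp only: nrm_append)
    then show ?thesis using assms(6,7) by simp
  qed
  have i: "p @ [e, f] @ q \<in> idx 6 \<longleftrightarrow> p @ [a, b] @ q \<in> idx 6"
    using assms by (auto simp: idx_def)
  have d: "distinct (nrm False p @ [v, u] @ nrm (pb (pb False p) [a, b]) q) \<longleftrightarrow>
      distinct (nrm False p @ [u, v] @ nrm (pb (pb False p) [a, b]) q)" by auto
  show ?thesis unfolding w0_def n1 n2 using i d invp_swap[OF assms(8)] by simp
qed

lemma w0_sq:
  assumes "a < 6"
  shows "w0 (p @ a # a # q) = 0"
proof -
  have "\<not> distinct (nrm False (p @ [a, a] @ q))"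
    by (simp add: nrm_append)
  then show ?thesis by (simp add: w0_def del: nrm.simps)
qed


lemma w0_Rc:
  assumes a: "\<alpha> \<in> {1, -1}" and "length p + length q = 4"
  shows "Rc \<alpha> \<beta> \<gamma> u1 u2 u3 u4 (\<lambda>m. w0 (p @ m @ q))"
proof (cases "pb False p")
  case True
  show ?thesis unfolding Rc_def
    apply (intro conjI)
    apply (simp add: w0_sq)
    using True a w0_swap[of 1 0 0 1 p 0 1 q] w0_swap[of 2 3 3 2 p 2 3 q] w0_swap[of 4 5 5 4 p 4 5 q] w0_swap[of 0 2 2 1 p 1 2 q] w0_swap[of 1 2 2 0 p 0 2 q] w0_swap[of 0 3 3 1 p 1 3 q] w0_swap[of 1 3 3 0 p 0 3 q] w0_swap[of 0 4 4 1 p 1 4 q] w0_swap[of 1 4 4 0 p 0 4 q] w0_swap[of 0 5 5 1 p 1 5 q] w0_swap[of 1 5 5 0 p 0 5 q] w0_swap[of 2 5 5 2 p 2 5 q] w0_swap[of 3 4 4 3 p 3 4 q] w0_swap[of 2 4 4 2 p 2 4 q] w0_swap[of 3 5 5 3 p 3 5 q]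
    by (auto simp: tt_def)
next
  case False
  show ?thesis unfolding Rc_def
    apply (intro conjI)
    apply (simp add: w0_sq)
    using False w0_swap[of 0 1 1 0 p 0 1 q] w0_swap[of 2 3 3 2 p 2 3 q] w0_swap[of 4 5 5 4 p 4 5 q] w0_swap[of 0 2 2 1 p 0 2 q] w0_swap[of 1 2 2 0 p 1 2 q] w0_swap[of 0 3 3 1 p 0 3 q] w0_swap[of 1 3 3 0 p 1 3 q] w0_swap[of 0 4 4 1 p 0 4 q] w0_swap[of 1 4 4 0 p 1 4 q] w0_swap[of 0 5 5 1 p 0 5 q] w0_swap[of 1 5 5 0 p 1 5 q] w0_swap[of 2 5 5 2 p 2 5 q] w0_swap[of 3 4 4 3 p 3 4 q] w0_swap[of 2 4 4 2 p 2 4 q] w0_swap[of 3 5 5 3 p 3 5 q]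
    by (auto simp: tt_def)
qed

lemma w0_W:
  assumes a: "\<alpha> \<in> {1, -1}"
  shows "w0 \<in> Wsp (rels \<alpha> \<beta> \<gamma> u1 u2 u3 u4)"
  unfolding Wsp_iff in_R_iff using w0_Rc[OF a] by (auto simp: w0_def)


definition pe :: "nat \<Rightarrow> nat \<Rightarrow> nat \<times> nat" where
  "pe a b = (if a < 2 \<and> b < 2 then (b, a) else if a < 2 then (b, 1 - a) else if b < 2 then (1 - b, a) else (b, a))"

definition pm :: "nat \<Rightarrow> nat \<Rightarrow> complex" where
  "pm a b = [1, (- \<alpha>), (- u1), (u1), (- \<i> * u2), (\<i> * u2), (1 / (- \<alpha>)), 1, (- u1), (u1), (- \<i> * u2), (\<i> * u2), (1 / (- u1)), (1 / (- u1)), 1, (- \<beta>), (- u4), (- u3), (1 / (u1)), (1 / (u1)), (1 / (- \<beta>)), 1, (- u3), (- u4), (1 / (- \<i> * u2)), (1 / (- \<i> * u2)), (1 / (- u4)), (1 / (- u3)), 1, (- \<gamma>), (1 / (\<i> * u2)), (1 / (\<i> * u2)), (1 / (- u3)), (1 / (- u4)), (1 / (- \<gamma>)), 1] ! (6 * a + b)"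

lemma pe_props:
  assumes "a < 6" "b < 6" "a \<noteq> b"
  shows "fst (pe a b) < 6 \<and> snd (pe a b) < 6 \<and>
    nrm bo [fst (pe a b), snd (pe a b)] = rev (nrm bo [a, b]) \<and>
    pb bo [fst (pe a b), snd (pe a b)] = pb bo [a, b] \<and>
    nrm bo [a, b] ! 0 \<noteq> nrm bo [a, b] ! 1"
  using six_cases[OF assms(1)] six_cases[OF assms(2)] assms(3)
  by (cases bo; elim disjE; simp add: pe_def)

lemma pm_ok:
  assumes "a < 6" "b < 6" "a \<noteq> b" and ne: "\<alpha> \<noteq> 0" "\<beta> \<noteq> 0" "\<gamma> \<noteq> 0" "u1 \<noteq> 0" "u2 \<noteq> 0" "u3 \<noteq> 0" "u4 \<noteq> 0"
    and R: "Rc \<alpha> \<beta> \<gamma> u1 u2 u3 u4 g"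
  shows "pm a b \<noteq> 0 \<and> g [fst (pe a b), snd (pe a b)] = pm a b * g [a, b]"
  using six_cases[OF assms(1)] six_cases[OF assms(2)] assms(3) R ne
  unfolding Rc_def
  by (elim disjE; simp add: pe_def pm_def field_simps)

end



definition val :: "nat list \<Rightarrow> nat" where
  "val l = foldl (\<lambda>acc x. 6 * acc + x) 0 l"

lemma foldl_shift: "foldl (\<lambda>acc x. 6 * acc + x) (c::nat) (l::nat list) = c * 6 ^ length l + foldl (\<lambda>acc x. 6 * acc + x) 0 l"
proof (induction l arbitrary: c)
  case Nil then show ?case by simp
next
  case (Cons x l)
  have "foldl (\<lambda>acc x. 6 * acc + x) c (x # l) = foldl (\<lambda>acc x. 6 * acc + x) (6 * c + x) l" by simp
  also have "\<dots> = (6 * c + x) * 6 ^ length l + foldl (\<lambda>acc x. 6 * acc + x) 0 l" by (rule Cons.IH)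
  also have "foldl (\<lambda>acc x. 6 * acc + x) 0 l = foldl (\<lambda>acc x. 6 * acc + x) x l - x * 6 ^ length l"
    using Cons.IH[of x] by simp
  finally show ?case using Cons.IH[of x] by (simp add: algebra_simps)
qed

lemma val_append: "val (P @ Q) = val P * 6 ^ length Q + val Q"
  unfolding val_def by (simp add: foldl_shift[of "foldl _ 0 P"])

lemma val_swap: assumes "y < x" shows "val (P @ [y, x] @ Q) < val (P @ [x, y] @ Q)"
proof -
  have h: "\<And>a b. val (P @ [a, b] @ Q) = (val P * 36 + (6 * a + b)) * 6 ^ length Q + val Q"
  proof -
    fix a b
    show "val (P @ [a, b] @ Q) = (val P * 36 + (6 * a + b)) * 6 ^ length Q + val Q"
      using val_append[of "P @ [a, b]" Q] val_append[of P "[a, b]"] by (simp add: val_def)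
  qed
  have "6 * y + x < 6 * x + y" using assms by simp
  then have "(val P * 36 + (6 * y + x)) * 6 ^ length Q < (val P * 36 + (6 * x + y)) * 6 ^ length Q"
    by (intro mult_strict_right_mono) auto
  then show ?thesis unfolding h by simp
qed

lemma split_at: "Suc t < length ks \<Longrightarrow> ks = take t ks @ [ks ! t, ks ! Suc t] @ drop (Suc (Suc t)) ks"
proof -
  assume a: "Suc t < length ks"
  have "drop t ks = ks ! t # drop (Suc t) ks" using a by (simp add: Cons_nth_drop_Suc)
  moreover have "drop (Suc t) ks = ks ! Suc t # drop (Suc (Suc t)) ks" using a by (simp add: Cons_nth_drop_Suc)
  ultimately show ?thesis by (metis append_Cons append_Nil append_take_drop_id)
qed

lemma len2: "length l = 2 \<Longrightarrow> l = [l!0, l!1]"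
  by (cases l; simp; case_tac list; simp)

context prm begin

lemma W_unique:
  assumes ne: "\<alpha> \<noteq> 0" "\<beta> \<noteq> 0" "\<gamma> \<noteq> 0" "u1 \<noteq> 0" "u2 \<noteq> 0" "u3 \<noteq> 0" "u4 \<noteq> 0"
    and v1: "v1 \<in> Wsp (rels \<alpha> \<beta> \<gamma> u1 u2 u3 u4)" and v2: "v2 \<in> Wsp (rels \<alpha> \<beta> \<gamma> u1 u2 u3 u4)"
  shows "ks \<in> idx 6 \<Longrightarrow> v1 ks * v2 [0,1,2,3,4,5] = v2 ks * v1 [0,1,2,3,4,5]"
proof (induction "val (nrm False ks)" arbitrary: ks rule: less_induct)
  case less
  have R: "\<And>v p q. v \<in> Wsp (rels \<alpha> \<beta> \<gamma> u1 u2 u3 u4) \<Longrightarrow> length p + length q = 4 \<Longrightarrow> set p \<subseteq> {..<6} \<Longrightarrow> set q \<subseteq> {..<6}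
      \<Longrightarrow> Rc \<alpha> \<beta> \<gamma> u1 u2 u3 u4 (\<lambda>m. v (p @ m @ q))"
    unfolding Wsp_iff in_R_iff by blast
  have lk: "length ks = 6" and sk: "set ks \<subseteq> {..<6}" using less.prems by (auto simp: idx_def)
  define n where "n = nrm False ks"
  have ln: "length n = 6" using lk by (simp add: n_def)
  have sn: "set n \<subseteq> {..<6}" using nrm_lt6[OF sk] by (simp add: n_def)
  show ?case
  proof (cases "\<exists>t<5. n ! Suc t \<le> n ! t")
    case True
    then obtain t where t: "t < 5" "n ! Suc t \<le> n ! t" by blast
    define p where "p = take t ks"
    define a where "a = ks ! t"
    define b where "b = ks ! Suc t"
    define q where "q = drop (Suc (Suc t)) ks"
    have ks: "ks = p @ [a, b] @ q" unfolding p_def a_def b_def q_def using split_at[of t ks] t lk by simp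
    have lp: "length p = t" using t lk by (simp add: p_def)
    have lpq: "length p + length q = 4" using t lk by (simp add: p_def q_def)
    have "ks ! t \<in> set ks" "ks ! Suc t \<in> set ks" using t lk by (auto intro!: nth_mem)
    then have ab: "a < 6" "b < 6" using sk unfolding a_def b_def by auto
    have sp: "set p \<subseteq> {..<6}" "set q \<subseteq> {..<6}" using sk by (auto simp: p_def q_def dest: in_set_takeD in_set_dropD)
    define bo where "bo = pb False p"
    have nks: "n = nrm False p @ nrm bo [a, b] @ nrm (pb bo [a, b]) q"
      unfolding n_def ks bo_def by (simp only: nrm_append)
    have nt: "n ! t = nrm bo [a, b] ! 0" "n ! Suc t = nrm bo [a, b] ! 1"
      unfolding nks using lp by (auto simp: nth_append)
    show ?thesis
    proof (cases "a = b")
      case True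
      have z: "\<And>v. v \<in> Wsp (rels \<alpha> \<beta> \<gamma> u1 u2 u3 u4) \<Longrightarrow> v ks = 0"
        using R[OF _ lpq sp] ab(1) unfolding ks True Rc_def by auto
      show ?thesis using z[OF v1] z[OF v2] by simp
    next
      case False
      note P = pe_props[OF ab False, of bo]
      define e where "e = fst (pe a b)"
      define f where "f = snd (pe a b)"
      define ks' where "ks' = p @ [e, f] @ q"
      have ks'i: "ks' \<in> idx 6" using P lpq sp by (auto simp: ks'_def idx_def e_def f_def)
      have "nrm False ks' = nrm False p @ nrm bo [e, f] @ nrm (pb bo [e, f]) q"
        unfolding ks'_def bo_def by (simp only: nrm_append)
      also have "\<dots> = nrm False p @ rev (nrm bo [a, b]) @ nrm (pb bo [a, b]) q"
        using P by (simp add: e_def f_def)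
      finally have nks': "nrm False ks' = nrm False p @ rev (nrm bo [a, b]) @ nrm (pb bo [a, b]) q" .
      obtain x y where xy: "nrm bo [a, b] = [x, y]"
        using len2[of "nrm bo [a, b]"] length_nrm[of bo "[a, b]"] by (simp del: nrm.simps)
      have "y < x" using t nt P xy by auto
      then have "val (nrm False ks') < val (nrm False ks)"
        using nks nks' xy val_swap[of y x "nrm False p" "nrm (pb bo [a, b]) q"] by (simp add: n_def)
      then have IH: "v1 ks' * v2 [0,1,2,3,4,5] = v2 ks' * v1 [0,1,2,3,4,5]"
        using less.hyps ks'i by blast
      have rel: "\<And>v. v \<in> Wsp (rels \<alpha> \<beta> \<gamma> u1 u2 u3 u4) \<Longrightarrow> v ks' = pm a b * v ks \<and> pm a b \<noteq> 0"
      proof -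
        fix v assume "v \<in> Wsp (rels \<alpha> \<beta> \<gamma> u1 u2 u3 u4)"
        from pm_ok[OF ab False ne R[OF this lpq sp]]
        show "v ks' = pm a b * v ks \<and> pm a b \<noteq> 0" by (simp add: ks'_def ks e_def f_def)
      qed
      from IH rel[OF v1] rel[OF v2] show ?thesis by (simp add: ac_simps)
    qed
  next
    case False
    then have inc: "\<forall>t<5. n ! t < n ! Suc t" by auto
    obtain n0 n1 n2 n3 n4 n5 where nn: "n = [n0, n1, n2, n3, n4, n5]"
      using ln by (cases n; simp; rename_tac l; case_tac l; simp; rename_tac l; case_tac l; simp;
          rename_tac l; case_tac l; simp; rename_tac l; case_tac l; simp; rename_tac l; case_tac l; simp)
    have "n0 < n1" "n1 < n2" "n2 < n3" "n3 < n4" "n4 < n5"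
      using inc[rule_format, of 0] inc[rule_format, of 1] inc[rule_format, of 2] inc[rule_format, of 3]
        inc[rule_format, of 4] by (simp_all add: nn)
    moreover have "n5 < 6" using sn by (simp add: nn)
    ultimately have "n = [0,1,2,3,4,5]" unfolding nn by simp
    then have "nrm False ks = nrm False [0,1,2,3,4,5]" by (simp add: n_def)
    then have "ks = [0,1,2,3,4,5]" using nrm_inj sk by metis
    then show ?thesis by (simp add: ac_simps)
  qed
qed

end



definition mono_form :: "(nat \<Rightarrow> nat \<Rightarrow> complex) \<Rightarrow> (nat \<Rightarrow> nat) \<Rightarrow> (nat \<Rightarrow> complex) \<Rightarrow> bool" where
  "mono_form M \<rho> e \<longleftrightarrow> (\<forall>j<6. \<forall>k<6. M j k = (if j = \<rho> k then e k else 0)) \<and> (\<forall>k<6. \<rho> k < 6)"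

definition gactM :: "(nat \<Rightarrow> nat \<Rightarrow> complex) \<Rightarrow> (nat list \<Rightarrow> complex) \<Rightarrow> nat list \<Rightarrow> complex" where
  "gactM M w ls = (if ls \<in> idx 6 then
      (\<Sum>ks\<in>idx 6. w ks * (\<Prod>t<6. M (ks ! t) (ls ! t))) else 0)"

lemma gact_gactM: "gact h w = gactM (gmat h) w"
  unfolding gact_def gactM_def by (rule ext) simp

lemma finite_idx: "finite (idx n)"
proof -
  have "idx n = {xs. set xs \<subseteq> {..<6} \<and> length xs = n}" by (auto simp: idx_def)
  then show ?thesis using finite_lists_length_eq[of "{..<6::nat}" n] by simp
qed

lemma prod_list_map_mult: "prod_list (map (\<lambda>k. f k * g k) l) = prod_list (map f l) * prod_list (map (g :: nat \<Rightarrow> complex) l)"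
  by (induction l) (auto simp: ac_simps)

lemma prod6: "length ls = 6 \<Longrightarrow> (\<Prod>t<6. e (ls ! t)) = prod_list (map e ls)"
  by (simp add: prod.list_conv_set_nth atLeast0LessThan)

lemma gactM_form:
  assumes mf: "mono_form M \<rho> e"
  shows "gactM M w = (\<lambda>ls. if ls \<in> idx 6 then w (map \<rho> ls) * prod_list (map e ls) else 0)"
proof (rule ext)
  fix ls
  show "gactM M w ls = (if ls \<in> idx 6 then w (map \<rho> ls) * prod_list (map e ls) else 0)"
  proof (cases "ls \<in> idx 6")
    case False then show ?thesis by (simp add: gactM_def)
  next
    case True
    then have ll: "length ls = 6" and sl: "set ls \<subseteq> {..<6}" by (auto simp: idx_def)
    have mi: "map \<rho> ls \<in> idx 6" using ll sl mf by (auto simp: idx_def mono_form_def)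
    have P: "(\<Prod>t<6. M (ks ! t) (ls ! t)) = (if ks = map \<rho> ls then prod_list (map e ls) else 0)"
      if ks: "ks \<in> idx 6" for ks
    proof -
      have lk: "length ks = 6" and sk: "set ks \<subseteq> {..<6}" using ks by (auto simp: idx_def)
      have "(\<Prod>t<6. M (ks ! t) (ls ! t)) = (\<Prod>t<6. if ks ! t = \<rho> (ls ! t) then e (ls ! t) else 0)"
      proof (rule prod.cong)
        fix t assume "t \<in> {..<6::nat}"
        then have "ks ! t \<in> set ks" "ls ! t \<in> set ls" using lk ll by (auto intro!: nth_mem)
        then have "ks ! t < 6" "ls ! t < 6" using sk sl by auto
        then show "M (ks ! t) (ls ! t) = (if ks ! t = \<rho> (ls ! t) then e (ls ! t) else 0)"
          using mf by (simp add: mono_form_def)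
      qed simp
      also have "\<dots> = (if ks = map \<rho> ls then prod_list (map e ls) else 0)"
      proof (cases "ks = map \<rho> ls")
        case True
        then show ?thesis using ll prod6[OF ll, of e] by simp
      next
        case False
        then obtain t where t: "t < 6" "ks ! t \<noteq> \<rho> (ls ! t)"
          using lk ll by (metis length_map list_eq_iff_nth_eq nth_map)
        then show ?thesis using False by (intro trans[OF prod_zero]) auto
      qed
      finally show ?thesis .
    qed
    have "gactM M w ls = (\<Sum>ks\<in>idx 6. w ks * (\<Prod>t<6. M (ks ! t) (ls ! t)))"
      using True by (simp add: gactM_def)
    also have "\<dots> = (\<Sum>ks\<in>idx 6. if ks = map \<rho> ls then w ks * prod_list (map e ls) else 0)"
      by (rule sum.cong) (auto simp: P)
    also have "\<dots> = w (map \<rho> ls) * prod_list (map e ls)"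
      using mi finite_idx by (simp add: sum.delta)
    finally show ?thesis using True by simp
  qed
qed

lemma matmul_form:
  assumes A: "mono_form A \<rho>A eA" and B: "mono_form B \<rho>B eB"
  shows "mono_form (matmul A B) (\<rho>A \<circ> \<rho>B) (\<lambda>k. eA (\<rho>B k) * eB k)"
  unfolding mono_form_def
proof (intro conjI allI impI)
  fix j k :: nat assume j: "j < 6" and k: "k < 6"
  have kk: "\<rho>B k < 6" using B k by (simp add: mono_form_def)
  have "matmul A B j k = (\<Sum>l<6. if l = \<rho>B k then A j l * eB k else 0)"
    unfolding matmul_def using B k by (intro sum.cong) (auto simp: mono_form_def)
  also have "\<dots> = A j (\<rho>B k) * eB k" using kk by (simp add: sum.delta)
  also have "\<dots> = (if j = (\<rho>A \<circ> \<rho>B) k then eA (\<rho>B k) * eB k else 0)"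
    using A j kk by (simp add: mono_form_def)
  finally show "matmul A B j k = (if j = (\<rho>A \<circ> \<rho>B) k then eA (\<rho>B k) * eB k else 0)" .
next
  fix k :: nat assume "k < 6" then show "(\<rho>A \<circ> \<rho>B) k < 6" using A B by (simp add: mono_form_def)
qed

lemma matid_form: "mono_form matid id (\<lambda>_. 1)"
  by (simp add: mono_form_def matid_def)

lemma matpow_form: "mono_form M \<rho> e \<Longrightarrow> \<exists>\<rho>' e'. mono_form (matpow M n) \<rho>' e'"
proof (induction n)
  case 0 then show ?case using matid_form by auto
next
  case (Suc n)
  then obtain \<rho>' e' where "mono_form (matpow M n) \<rho>' e'" by blast
  then have "mono_form (matmul (matpow M n) M) (\<rho>' \<circ> \<rho>) (\<lambda>k. e' (\<rho> k) * e k)"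
    using matmul_form[OF _ Suc.prems] by blast
  then show ?case by auto
qed

lemma gactM_matmul:
  assumes A: "mono_form A \<rho>A eA" and B: "mono_form B \<rho>B eB"
  shows "gactM (matmul A B) w = gactM B (gactM A w)"
proof -
  have mi: "\<And>ls. ls \<in> idx 6 \<Longrightarrow> map \<rho>B ls \<in> idx 6" using B by (auto simp: idx_def mono_form_def)
  show ?thesis
    unfolding gactM_form[OF matmul_form[OF A B]] gactM_form[OF A] gactM_form[OF B]
    by (rule ext) (auto simp: mi prod_list_map_mult comp_def ac_simps)
qed

lemma gactM_scale: "gactM M (\<lambda>ks. d * w ks) = (\<lambda>ls. d * gactM M w ls)"
  unfolding gactM_def by (rule ext) (simp add: sum_distrib_left ac_simps)

lemma prod_list_one: "prod_list (map (\<lambda>_. 1::complex) l) = 1"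
  by (induction l) auto

lemma gactM_id: "(\<And>ks. ks \<notin> idx 6 \<Longrightarrow> w ks = 0) \<Longrightarrow> gactM matid w = w"
  unfolding gactM_form[OF matid_form] by (rule ext) (auto simp: prod_list_one)

lemma gactM_pow:
  assumes mf: "mono_form M \<rho> e" and sup: "\<And>ks. ks \<notin> idx 6 \<Longrightarrow> w ks = 0"
    and ev: "gactM M w = (\<lambda>ks. c * w ks)"
  shows "gactM (matpow M n) w = (\<lambda>ks. c ^ n * w ks)"
proof (induction n)
  case 0 then show ?case using gactM_id[OF sup] by simp
next
  case (Suc n)
  obtain \<rho>' e' where f: "mono_form (matpow M n) \<rho>' e'" using matpow_form[OF mf] by blast
  have "gactM (matpow M (Suc n)) w = gactM M (gactM (matpow M n) w)"
    using gactM_matmul[OF f mf] by simp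
  also have "\<dots> = (\<lambda>ks. c ^ Suc n * w ks)" unfolding Suc gactM_scale ev by (simp add: ac_simps)
  finally show ?case .
qed

definition \<rho>r :: "nat \<Rightarrow> nat" where "\<rho>r k = [1,0,3,2,5,4] ! k"
definition er :: "nat \<Rightarrow> complex" where "er k = [-1,1,-1,-1,-\<i>,-\<i>] ! k"
definition \<rho>s :: "nat \<Rightarrow> nat" where "\<rho>s k = [0,1,3,2,5,4] ! k"
definition es :: "nat \<Rightarrow> complex" where "es k = [-\<i>,\<i>,1,1,-1,1] ! k"

lemma Mr_form: "mono_form Mr \<rho>r er"
  unfolding mono_form_def
proof (intro conjI allI impI)
  fix j k :: nat assume "j < 6" "k < 6"
  then show "Mr j k = (if j = \<rho>r k then er k else 0)"
    using six_cases[OF \<open>j < 6\<close>] six_cases[OF \<open>k < 6\<close>] by (elim disjE; simp add: Mr_def \<rho>r_def er_def)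
next
  fix k :: nat assume "k < 6" then show "\<rho>r k < 6"
    using six_cases[OF \<open>k < 6\<close>] by (elim disjE; simp add: \<rho>r_def)
qed

lemma Ms_form: "mono_form Ms \<rho>s es"
  unfolding mono_form_def
proof (intro conjI allI impI)
  fix j k :: nat assume "j < 6" "k < 6"
  then show "Ms j k = (if j = \<rho>s k then es k else 0)"
    using six_cases[OF \<open>j < 6\<close>] six_cases[OF \<open>k < 6\<close>] by (elim disjE; simp add: Ms_def \<rho>s_def es_def)
next
  fix k :: nat assume "k < 6" then show "\<rho>s k < 6"
    using six_cases[OF \<open>k < 6\<close>] by (elim disjE; simp add: \<rho>s_def)
qed




context prm begin

lemma Rc_cong: "Rc \<alpha> \<beta> \<gamma> u1 u2 u3 u4 g \<Longrightarrow> (\<And>a b. a < 6 \<Longrightarrow> b < 6 \<Longrightarrow> g' [a, b] = g [a, b]) \<Longrightarrow> Rc \<alpha> \<beta> \<gamma> u1 u2 u3 u4 g'"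
  unfolding Rc_def by simp

lemma Rc_scale: "Rc \<alpha> \<beta> \<gamma> u1 u2 u3 u4 g \<Longrightarrow> Rc \<alpha> \<beta> \<gamma> u1 u2 u3 u4 (\<lambda>m. K * g m)"
  unfolding Rc_def by simp

lemma Rc_Mr:
  assumes "\<alpha> \<in> {1, -1}" "\<beta> \<in> {1, -1}" "\<gamma> \<in> {1, -1}" "Rc \<alpha> \<beta> \<gamma> u1 u2 u3 u4 g"
  shows "Rc \<alpha> \<beta> \<gamma> u1 u2 u3 u4 (\<lambda>m. g (map \<rho>r m) * prod_list (map er m))"
proof -
  have sq: "\<forall>a<6. g [\<rho>r a, \<rho>r a] = 0" using assms(4) Mr_form unfolding Rc_def mono_form_def by auto
  show ?thesis unfolding Rc_def
    apply (intro conjI)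
    using sq apply simp
    using assms unfolding Rc_def by (auto simp: \<rho>r_def er_def)
qed

lemma Rc_Ms:
  assumes "\<alpha> \<in> {1, -1}" "\<beta> \<in> {1, -1}" "\<gamma> \<in> {1, -1}" "Rc \<alpha> \<beta> \<gamma> u1 u2 u3 u4 g"
  shows "Rc \<alpha> \<beta> \<gamma> u1 u2 u3 u4 (\<lambda>m. g (map \<rho>s m) * prod_list (map es m))"
proof -
  have sq: "\<forall>a<6. g [\<rho>s a, \<rho>s a] = 0" using assms(4) Ms_form unfolding Rc_def mono_form_def by auto
  show ?thesis unfolding Rc_def
    apply (intro conjI)
    using sq apply simp
    using assms unfolding Rc_def by (auto simp: \<rho>s_def es_def)
qed


lemma W_gact:
  assumes mf: "mono_form M \<rho> e"
    and pres: "\<And>g. Rc \<alpha> \<beta> \<gamma> u1 u2 u3 u4 g \<Longrightarrow> Rc \<alpha> \<beta> \<gamma> u1 u2 u3 u4 (\<lambda>m. g (map \<rho> m) * prod_list (map e m))"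
    and w: "w \<in> Wsp (rels \<alpha> \<beta> \<gamma> u1 u2 u3 u4)"
  shows "gactM M w \<in> Wsp (rels \<alpha> \<beta> \<gamma> u1 u2 u3 u4)"
  unfolding Wsp_iff in_R_iff
proof (intro conjI allI impI)
  fix ks assume "ks \<notin> idx 6" then show "gactM M w ks = 0" by (simp add: gactM_def)
next
  fix p q :: "nat list" assume l: "length p + length q = 4" and sp: "set p \<subseteq> {..<6}" and sq: "set q \<subseteq> {..<6}"
  have r6: "\<And>k. k < 6 \<Longrightarrow> \<rho> k < 6" using mf by (simp add: mono_form_def)
  have s2: "set (map \<rho> p) \<subseteq> {..<6}" "set (map \<rho> q) \<subseteq> {..<6}" using sp sq r6 by auto
  have "Rc \<alpha> \<beta> \<gamma> u1 u2 u3 u4 (\<lambda>m. w (map \<rho> p @ m @ map \<rho> q))"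
    using w l s2 unfolding Wsp_iff in_R_iff by auto
  from Rc_scale[OF pres[OF this], of "prod_list (map e p) * prod_list (map e q)"]
  show "Rc \<alpha> \<beta> \<gamma> u1 u2 u3 u4 (\<lambda>m. gactM M w (p @ m @ q))"
  proof (rule Rc_cong)
    fix a b :: nat assume "a < 6" "b < 6"
    then have "p @ [a, b] @ q \<in> idx 6" using l sp sq by (auto simp: idx_def)
    then show "gactM M w (p @ [a, b] @ q) = prod_list (map e p) * prod_list (map e q) *
        (w (map \<rho> p @ map \<rho> [a, b] @ map \<rho> q) * prod_list (map e [a, b]))"
      unfolding gactM_form[OF mf] by (simp add: ac_simps)
  qed
qed

lemma gen_grade_vals: "gen_grade 0 = (0,1)" "gen_grade 1 = (2,1)" "gen_grade 2 = (3,1)" "gen_grade 3 = (1,1)"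
  "gen_grade 4 = (3,1)" "gen_grade 5 = (1,1)" "gen_grade (Suc 0) = (2,1)"
  by (simp_all add: gen_grade_def gmul_def gs_def gr_def)

lemma gmul_G: "gmul x y \<in> G"
  by (auto simp: gmul_def G_def split: prod.splits)

lemma word_grade_G: "word_grade p \<in> G"
proof -
  have "\<And>x. x \<in> G \<Longrightarrow> foldl (\<lambda>g j. gmul g (gen_grade j)) x p \<in> G"
    by (induction p) (auto simp: gmul_G)
  then show ?thesis unfolding word_grade_def by (simp add: ge_def G_def)
qed

lemma G_cases: "x \<in> G \<Longrightarrow> x \<in> {(0,0),(1,0),(2,0),(3,0),(0,1),(1,1),(2,1),(3,1)}"
proof -
  assume "x \<in> G"
  then obtain a b where x: "x = (a, b)" "0 \<le> a" "a \<le> 3" "0 \<le> b" "b \<le> 1" by (auto simp: G_def)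
  then have "a = 0 \<or> a = 1 \<or> a = 2 \<or> a = 3" "b = 0 \<or> b = 1" by auto
  then show ?thesis using x by auto
qed

lemma grade_pairs:
  assumes "x \<in> G"
  shows "gmul (gmul x (gen_grade 1)) (gen_grade 0) = gmul (gmul x (gen_grade 0)) (gen_grade 1)"
    "gmul (gmul x (gen_grade 3)) (gen_grade 2) = gmul (gmul x (gen_grade 2)) (gen_grade 3)"
    "gmul (gmul x (gen_grade 5)) (gen_grade 4) = gmul (gmul x (gen_grade 4)) (gen_grade 5)"
    "gmul (gmul x (gen_grade 2)) (gen_grade 1) = gmul (gmul x (gen_grade 0)) (gen_grade 2)"
    "gmul (gmul x (gen_grade 2)) (gen_grade 0) = gmul (gmul x (gen_grade 1)) (gen_grade 2)"
    "gmul (gmul x (gen_grade 3)) (gen_grade 1) = gmul (gmul x (gen_grade 0)) (gen_grade 3)"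
    "gmul (gmul x (gen_grade 3)) (gen_grade 0) = gmul (gmul x (gen_grade 1)) (gen_grade 3)"
    "gmul (gmul x (gen_grade 4)) (gen_grade 1) = gmul (gmul x (gen_grade 0)) (gen_grade 4)"
    "gmul (gmul x (gen_grade 4)) (gen_grade 0) = gmul (gmul x (gen_grade 1)) (gen_grade 4)"
    "gmul (gmul x (gen_grade 5)) (gen_grade 1) = gmul (gmul x (gen_grade 0)) (gen_grade 5)"
    "gmul (gmul x (gen_grade 5)) (gen_grade 0) = gmul (gmul x (gen_grade 1)) (gen_grade 5)"
    "gmul (gmul x (gen_grade 5)) (gen_grade 2) = gmul (gmul x (gen_grade 2)) (gen_grade 5)"
    "gmul (gmul x (gen_grade 4)) (gen_grade 3) = gmul (gmul x (gen_grade 3)) (gen_grade 4)"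
    "gmul (gmul x (gen_grade 4)) (gen_grade 2) = gmul (gmul x (gen_grade 2)) (gen_grade 4)"
    "gmul (gmul x (gen_grade 5)) (gen_grade 3) = gmul (gmul x (gen_grade 3)) (gen_grade 5)"
  using G_cases[OF assms] by (auto simp: gen_grade_vals gmul_def)

lemma word_grade_split: "word_grade (p @ a # b # q) = foldl (\<lambda>g j. gmul g (gen_grade j)) (gmul (gmul (word_grade p) (gen_grade a)) (gen_grade b)) q"
  unfolding word_grade_def by simp

lemma W_proj:
  assumes w: "w \<in> Wsp (rels \<alpha> \<beta> \<gamma> u1 u2 u3 u4)"
  shows "proj g w \<in> Wsp (rels \<alpha> \<beta> \<gamma> u1 u2 u3 u4)"
  unfolding Wsp_iff in_R_iff
proof (intro conjI allI impI)
  fix ks assume "ks \<notin> idx 6" then show "proj g w ks = 0" using w by (simp add: proj_def Wsp_iff)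
next
  fix p q :: "nat list" assume l: "length p + length q = 4" and sp: "set p \<subseteq> {..<6}" and sq: "set q \<subseteq> {..<6}"
  have R: "Rc \<alpha> \<beta> \<gamma> u1 u2 u3 u4 (\<lambda>m. w (p @ m @ q))"
    using w l sp sq unfolding Wsp_iff in_R_iff by auto
  note gp = grade_pairs[OF word_grade_G[of p]]
  show "Rc \<alpha> \<beta> \<gamma> u1 u2 u3 u4 (\<lambda>m. proj g w (p @ m @ q))"
    using R unfolding Rc_def proj_def
    by (simp add: word_grade_split gp del: One_nat_def)
qed


lemma w0_vals: "w0 [0,1,2,3,4,5] = 1" "w0 [1,0,3,2,5,4] = - \<alpha> * \<beta> * \<gamma>" "w0 [0,1,3,2,5,4] = \<beta> * \<gamma>"
  by (simp_all add: w0_def idx_def tt_def fx_def)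

lemma main_loc:
  assumes ha: "\<alpha> \<in> {1, -1}" and hb: "\<beta> \<in> {1, -1}" and hc: "\<gamma> \<in> {1, -1}"
    and "u1 \<noteq> 0" and "u2 \<noteq> 0" and "u3 \<noteq> 0" and "u4 \<noteq> 0"
  shows "(\<exists>w\<in>Wsp (rels \<alpha> \<beta> \<gamma> u1 u2 u3 u4). w \<noteq> (\<lambda>_. 0))
    \<and> (\<forall>g\<in>G. hdet (rels \<alpha> \<beta> \<gamma> u1 u2 u3 u4) (dphi g) = (if g = ge then 1 else 0))
    \<and> hdet (rels \<alpha> \<beta> \<gamma> u1 u2 u3 u4) (dgrp gr) = - \<alpha> * \<beta> * \<gamma>
    \<and> hdet (rels \<alpha> \<beta> \<gamma> u1 u2 u3 u4) (dgrp gs) = - \<beta> * \<gamma>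
    \<and> ((\<forall>x. hdet (rels \<alpha> \<beta> \<gamma> u1 u2 u3 u4) x = dcounit x) \<longleftrightarrow> (\<alpha> = 1 \<and> \<beta> = - \<gamma>))"
proof -
  let ?W = "Wsp (rels \<alpha> \<beta> \<gamma> u1 u2 u3 u4)"
  let ?k0 = "[0,1,2,3,4,5] :: nat list"
  have ne: "\<alpha> \<noteq> 0" "\<beta> \<noteq> 0" "\<gamma> \<noteq> 0" "u1 \<noteq> 0" "u2 \<noteq> 0" "u3 \<noteq> 0" "u4 \<noteq> 0"
    using assms by auto
  have W0: "w0 \<in> ?W" by (rule w0_W[OF ha])
  have span: "v = (\<lambda>ks. v ?k0 * w0 ks)" if v: "v \<in> ?W" for v
  proof (rule ext)
    fix ks
    show "v ks = v ?k0 * w0 ks"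
    proof (cases "ks \<in> idx 6")
      case True
      from W_unique[OF ne v W0 True] show ?thesis using w0_vals(1) by (simp add: ac_simps)
    next
      case False
      then show ?thesis using v by (simp add: Wsp_iff w0_def)
    qed
  qed
  have k0: "?k0 \<in> idx 6" by (simp add: idx_def)
  have r_ev: "gactM Mr w0 = (\<lambda>ks. (- \<alpha> * \<beta> * \<gamma>) * w0 ks)"
  proof -
    have "gactM Mr w0 \<in> ?W" by (rule W_gact[OF Mr_form Rc_Mr[OF ha hb hc] W0])
    from span[OF this] have "gactM Mr w0 = (\<lambda>ks. gactM Mr w0 ?k0 * w0 ks)" .
    moreover have "gactM Mr w0 ?k0 = - \<alpha> * \<beta> * \<gamma>"
      unfolding gactM_form[OF Mr_form] using k0 w0_vals(2) by (simp add: \<rho>r_def er_def)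
    ultimately show ?thesis by simp
  qed
  have s_ev: "gactM Ms w0 = (\<lambda>ks. (- \<beta> * \<gamma>) * w0 ks)"
  proof -
    have "gactM Ms w0 \<in> ?W" by (rule W_gact[OF Ms_form Rc_Ms[OF ha hb hc] W0])
    from span[OF this] have "gactM Ms w0 = (\<lambda>ks. gactM Ms w0 ?k0 * w0 ks)" .
    moreover have "gactM Ms w0 ?k0 = - \<beta> * \<gamma>"
      unfolding gactM_form[OF Ms_form] using k0 w0_vals(3) by (simp add: \<rho>s_def es_def)
    ultimately show ?thesis by simp
  qed
  have sup: "\<And>ks. ks \<notin> idx 6 \<Longrightarrow> w0 ks = 0" by (simp add: w0_def)
  define \<chi> where "\<chi> h = (- \<alpha> * \<beta> * \<gamma>) ^ nat (fst h) * (- \<beta> * \<gamma>) ^ nat (snd h)" for h :: grp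
  have gact_ev: "gact h w0 = (\<lambda>ks. \<chi> h * w0 ks)" for h
  proof -
    obtain fr er' where f1: "mono_form (matpow Mr (nat (fst h))) fr er'" using matpow_form[OF Mr_form] by blast
    obtain fs es' where f2: "mono_form (matpow Ms (nat (snd h))) fs es'" using matpow_form[OF Ms_form] by blast
    have "gact h w0 = gactM (matpow Ms (nat (snd h))) (gactM (matpow Mr (nat (fst h))) w0)"
      unfolding gact_gactM gmat_def using gactM_matmul[OF f1 f2] by simp
    also have "\<dots> = gactM (matpow Ms (nat (snd h))) (\<lambda>ks. (- \<alpha> * \<beta> * \<gamma>) ^ nat (fst h) * w0 ks)"
      using gactM_pow[OF Mr_form sup r_ev] by simp
    also have "\<dots> = (\<lambda>ks. (- \<alpha> * \<beta> * \<gamma>) ^ nat (fst h) * gactM (matpow Ms (nat (snd h))) w0 ks)"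
      by (rule gactM_scale)
    also have "\<dots> = (\<lambda>ks. \<chi> h * w0 ks)"
      using gactM_pow[OF Ms_form sup s_ev] by (simp add: \<chi>_def ac_simps)
    finally show ?thesis .
  qed
  have wg0: "word_grade ?k0 = ge"
    by (simp add: word_grade_def gen_grade_vals gmul_def ge_def)
  have proj_ev: "proj g w0 = (\<lambda>ks. (if g = ge then 1 else 0) * w0 ks)" for g
  proof -
    from span[OF W_proj[OF W0]] have "proj g w0 = (\<lambda>ks. proj g w0 ?k0 * w0 ks)" .
    moreover have "proj g w0 ?k0 = (if g = ge then 1 else 0)"
      using wg0 w0_vals(1) by (auto simp: proj_def)
    ultimately show ?thesis by simp
  qed
  have gact_scale: "gact h (\<lambda>ks. d * w ks) = (\<lambda>ks. d * gact h w ks)" for h d w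
    unfolding gact_gactM gactM_scale ..
  have geG: "ge \<in> G" by (simp add: ge_def G_def)
  have dact_w0: "dact x w0 = (\<lambda>ks. (\<Sum>h\<in>G. x ge h * \<chi> h) * w0 ks)" for x
  proof (rule ext)
    fix ks
    have "dact x w0 ks = (\<Sum>g\<in>G. \<Sum>h\<in>G. (if g = ge then x g h * (\<chi> h * w0 ks) else 0))"
      unfolding dact_def proj_ev gact_scale gact_ev by (intro sum.cong refl) auto
    also have "\<dots> = (\<Sum>g\<in>G. if g = ge then (\<Sum>h\<in>G. x g h * (\<chi> h * w0 ks)) else 0)"
      by (intro sum.cong refl) auto
    also have "\<dots> = (\<Sum>h\<in>G. x ge h * (\<chi> h * w0 ks))"
      using geG by (simp add: G_def)
    also have "\<dots> = (\<Sum>h\<in>G. x ge h * \<chi> h) * w0 ks"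
      by (simp add: sum_distrib_right ac_simps)
    finally show "dact x w0 ks = (\<Sum>h\<in>G. x ge h * \<chi> h) * w0 ks" .
  qed
  have dact_scale: "dact x (\<lambda>ks. c * w ks) = (\<lambda>ks. c * dact x w ks)" for x c w
  proof -
    have "proj g (\<lambda>ks. c * w ks) = (\<lambda>ks. c * proj g w ks)" for g by (rule ext) (simp add: proj_def)
    then show ?thesis unfolding dact_def
      by (simp add: gact_scale sum_distrib_left ac_simps)
  qed
  have hdet_eq: "hdet (rels \<alpha> \<beta> \<gamma> u1 u2 u3 u4) x = (\<Sum>h\<in>G. x ge h * \<chi> h)" for x
    unfolding hdet_def
  proof (rule the_equality)
    show "\<forall>w\<in>?W. dact x w = (\<lambda>ks. (\<Sum>h\<in>G. x ge h * \<chi> h) * w ks)"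
    proof
      fix w assume w: "w \<in> ?W"
      have "dact x w = dact x (\<lambda>ks. w ?k0 * w0 ks)" using span[OF w] by simp
      also have "\<dots> = (\<lambda>ks. (\<Sum>h\<in>G. x ge h * \<chi> h) * (w ?k0 * w0 ks))"
        unfolding dact_scale dact_w0 by (simp add: ac_simps)
      also have "\<dots> = (\<lambda>ks. (\<Sum>h\<in>G. x ge h * \<chi> h) * w ks)" using span[OF w] by metis
      finally show "dact x w = (\<lambda>ks. (\<Sum>h\<in>G. x ge h * \<chi> h) * w ks)" .
    qed
  next
    fix c assume "\<forall>w\<in>?W. dact x w = (\<lambda>ks. c * w ks)"
    then have "dact x w0 ?k0 = c * w0 ?k0" using W0 by simp
    then show "c = (\<Sum>h\<in>G. x ge h * \<chi> h)" using dact_w0[of x] w0_vals(1) by simp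
  qed
  have sum_pt: "(\<Sum>h\<in>G. (if h = a then 1 else 0) * f h) = f a" if "a \<in> G" for a and f :: "grp \<Rightarrow> complex"
  proof -
    have fG: "finite G" by (simp add: G_def)
    have "(\<Sum>h\<in>G. (if h = a then 1 else 0) * f h) = (\<Sum>h\<in>G. if h = a then f h else 0)"
      by (intro sum.cong) auto
    also have "\<dots> = f a" using that fG by (simp add: sum.delta)
    finally show ?thesis .
  qed
  have grG: "gr \<in> G" and gsG: "gs \<in> G" by (simp_all add: gr_def gs_def G_def)
  have c1: "\<exists>w\<in>?W. w \<noteq> (\<lambda>_. 0)"
    using W0 w0_vals(1) by (metis zero_neq_one)
  have c2: "\<forall>g\<in>G. hdet (rels \<alpha> \<beta> \<gamma> u1 u2 u3 u4) (dphi g) = (if g = ge then 1 else 0)"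
  proof
    fix g assume "g \<in> G"
    have "hdet (rels \<alpha> \<beta> \<gamma> u1 u2 u3 u4) (dphi g) = (\<Sum>h\<in>G. (if h = ge then (if ge = g then 1 else 0) else 0) * \<chi> h)"
      unfolding hdet_eq dphi_def by (intro sum.cong refl) auto
    also have "\<dots> = (\<Sum>h\<in>G. (if h = ge then 1 else 0) * ((if ge = g then 1 else 0) * \<chi> h))"
      by (intro sum.cong refl) auto
    also have "\<dots> = (if ge = g then 1 else 0) * \<chi> ge" using sum_pt[OF geG] by simp
    also have "\<dots> = (if g = ge then 1 else 0)" by (simp add: \<chi>_def ge_def)
    finally show "hdet (rels \<alpha> \<beta> \<gamma> u1 u2 u3 u4) (dphi g) = (if g = ge then 1 else 0)" .
  qed
  have hg: "hdet (rels \<alpha> \<beta> \<gamma> u1 u2 u3 u4) (dgrp a) = \<chi> a" if "a \<in> G" for a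
    unfolding hdet_eq dgrp_def using sum_pt[OF that] by simp
  have c3: "hdet (rels \<alpha> \<beta> \<gamma> u1 u2 u3 u4) (dgrp gr) = - \<alpha> * \<beta> * \<gamma>"
    using hg[OF grG] by (simp add: \<chi>_def gr_def)
  have c4: "hdet (rels \<alpha> \<beta> \<gamma> u1 u2 u3 u4) (dgrp gs) = - \<beta> * \<gamma>"
    using hg[OF gsG] by (simp add: \<chi>_def gs_def)
  have cnt: "dcounit (dgrp a) = 1" if "a \<in> G" for a
    unfolding dcounit_def dgrp_def using sum_pt[OF that, of "\<lambda>_. 1"] by simp
  have c5: "(\<forall>x. hdet (rels \<alpha> \<beta> \<gamma> u1 u2 u3 u4) x = dcounit x) \<longleftrightarrow> (\<alpha> = 1 \<and> \<beta> = - \<gamma>)"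
  proof
    assume H: "\<forall>x. hdet (rels \<alpha> \<beta> \<gamma> u1 u2 u3 u4) x = dcounit x"
    have e1: "- \<alpha> * \<beta> * \<gamma> = 1" using H c3 cnt[OF grG] by metis
    have e2: "- \<beta> * \<gamma> = 1" using H c4 cnt[OF gsG] by metis
    have "\<alpha> = 1" using e1 e2 by (metis mult.assoc mult_minus_left mult_minus_right mult.commute mult_1)
    moreover have "\<beta> = - \<gamma>" using e2 hb hc by auto
    ultimately show "\<alpha> = 1 \<and> \<beta> = - \<gamma>" by simp
  next
    assume A: "\<alpha> = 1 \<and> \<beta> = - \<gamma>"
    then have "- \<alpha> * \<beta> * \<gamma> = 1" "- \<beta> * \<gamma> = 1" using hc by auto
    then have "\<chi> h = 1" for h by (simp add: \<chi>_def)
    then show "\<forall>x. hdet (rels \<alpha> \<beta> \<gamma> u1 u2 u3 u4) x = dcounit x"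
      by (simp add: hdet_eq dcounit_def)
  qed
  show ?thesis using c1 c2 c3 c4 c5 by blast
qed

end

theorem mainTheorem8:
  fixes \<alpha> \<beta> \<gamma> u1 u2 u3 u4 :: complex
  assumes "\<alpha> \<in> {1, -1}" and "\<beta> \<in> {1, -1}" and "\<gamma> \<in> {1, -1}"
    and "u1 \<noteq> 0" and "u2 \<noteq> 0" and "u3 \<noteq> 0" and "u4 \<noteq> 0"
  shows "(\<exists>w\<in>Wsp (rels \<alpha> \<beta> \<gamma> u1 u2 u3 u4). w \<noteq> (\<lambda>_. 0))
    \<and> (\<forall>g\<in>G. hdet (rels \<alpha> \<beta> \<gamma> u1 u2 u3 u4) (dphi g) = (if g = ge then 1 else 0))
    \<and> hdet (rels \<alpha> \<beta> \<gamma> u1 u2 u3 u4) (dgrp gr) = - \<alpha> * \<beta> * \<gamma>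
    \<and> hdet (rels \<alpha> \<beta> \<gamma> u1 u2 u3 u4) (dgrp gs) = - \<beta> * \<gamma>
    \<and> ((\<forall>x. hdet (rels \<alpha> \<beta> \<gamma> u1 u2 u3 u4) x = dcounit x) \<longleftrightarrow> (\<alpha> = 1 \<and> \<beta> = - \<gamma>))"
  using prm.main_loc[OF assms] .

end
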